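(* Let $\mathcal C$ be a Markov category in which, for every object $X$, the copy morphism $\mathrm{copy}_X$ is an initial dilation of $\mathrm{id}_X$. Then every non-creative morphism of $\mathcal C$ is deterministic, and the class of non-creative morphisms equals the class of deterministic morphisms if and only if $\mathcal C$ is positive.
   Context: A Markov category is a symmetric monoidal category $(\mathcal C,\otimes,I)$ with commutative comonoids $\mathrm{copy}_X\colon X\to X\otimes X$, $\mathrm{del}_X\colon X\to I$ compatible with $\otimes$, with $I$ terminal. $f\colon A\to X$ is deterministic if $\mathrm{copy}_X\circ f=(f\otimes f)\circ\mathrm{copy}_A$. $\mathcal C$ is positive if for all $f\colon X\to Y$, $g\colon Y\to Z$ with $g\circ f$ deterministic, $(\mathrm{id}_Y\otimes g)\circ\mathrm{copy}_Y\circ f=(f\otimes (g\circ f))\circ\mathrm{copy}_X$. A dilation of $p\colon A\to X$ is $\pi\colon A\to X\otimes E$ with $(\mathrm{id}_X\otimes\mathrm{del}_E)\circ\pi=p$. For a dilation $\pi\colon A\to X\otimes E$ and $f_1,f_2\colon E\to E'$, these are $\pi$-dilationally equal if for every dilation $\rho\colon A\to X\otimes E\otimes F$ of $\pi$, $(\mathrm{id}_X\otimes f_1\otimes\mathrm{id}_F)\circ\rho=(\mathrm{id}_X\otimes f_2\otimes\mathrm{id}_F)\circ\rho$. A dilation $\pi\colon A\to X\otimes E$ of $p$ is initial if for every dilation $\pi'\colon A\to X\otimes E'$ of $p$ there is $f\colon E\to E'$ with $(\mathrm{id}_X\otimes f)\circ\pi=\pi'$, unique up to $\pi$-dilational equality.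 A morphism $p\colon A\to X$ is non-creative if every dilation $\pi\colon A\to X\otimes E$ of $p$ equals $(p\otimes\mathrm{id}_E)\circ\iota$ for some dilation $\iota\colon A\to A\otimes E$ of $\mathrm{id}_A$. *)

theory Defs
  imports Main
begin

text \<open>A (strict) symmetric monoidal category with chosen copy/delete maps.
  Morphisms are elements of Arr with domain Dom and codomain Cod;
  Comp C g f is the composite g after f.\<close>

record ('o, 'm) mcat =
  Obj  :: "'o set"
  Arr  :: "'m set"
  Dom  :: "'m \<Rightarrow> 'o"
  Cod  :: "'m \<Rightarrow> 'o"
  Comp :: "'m \<Rightarrow> 'm \<Rightarrow> 'm"
  Idm  :: "'o \<Rightarrow> 'm"
  TensO :: "'o \<Rightarrow> 'o \<Rightarrow> 'o"
  TensM :: "'m \<Rightarrow> 'm \<Rightarrow> 'm"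
  Unit :: "'o"
  Swap :: "'o \<Rightarrow> 'o \<Rightarrow> 'm"
  Copy :: "'o \<Rightarrow> 'm"
  Del  :: "'o \<Rightarrow> 'm"

definition hom :: "('o, 'm, 'x) mcat_scheme \<Rightarrow> 'o \<Rightarrow> 'o \<Rightarrow> 'm set" where
  "hom C A B = {f \<in> Arr C. Dom C f = A \<and> Cod C f = B}"

locale markov_category =
  fixes C :: "('o, 'm, 'x) mcat_scheme"
  assumes dom_obj: "f \<in> Arr C \<Longrightarrow> Dom C f \<in> Obj C"
    and cod_obj: "f \<in> Arr C \<Longrightarrow> Cod C f \<in> Obj C"
    and comp_hom: "\<lbrakk>f \<in> hom C A B; g \<in> hom C B D\<rbrakk> \<Longrightarrow> Comp C g f \<in> hom C A D"
    and comp_assoc: "\<lbrakk>f \<in> hom C A B; g \<in> hom C B D; h \<in> hom C D E\<rbrakk> \<Longrightarrow>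
        Comp C h (Comp C g f) = Comp C (Comp C h g) f"
    and id_hom: "A \<in> Obj C \<Longrightarrow> Idm C A \<in> hom C A A"
    and id_left: "f \<in> Arr C \<Longrightarrow> Comp C (Idm C (Cod C f)) f = f"
    and id_right: "f \<in> Arr C \<Longrightarrow> Comp C f (Idm C (Dom C f)) = f"
    and tens_obj: "\<lbrakk>A \<in> Obj C; B \<in> Obj C\<rbrakk> \<Longrightarrow> TensO C A B \<in> Obj C"
    and unit_obj: "Unit C \<in> Obj C"
    and tens_hom: "\<lbrakk>f \<in> hom C A B; g \<in> hom C A' B'\<rbrakk> \<Longrightarrow>
        TensM C f g \<in> hom C (TensO C A A') (TensO C B B')"
    and tens_id: "\<lbrakk>A \<in> Obj C; B \<in> Obj C\<rbrakk> \<Longrightarrow> TensM C (Idm C A) (Idm C B) = Idm C (TensO C A B)"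
    and tens_comp: "\<lbrakk>f1 \<in> hom C A B; g1 \<in> hom C B D; f2 \<in> hom C A' B'; g2 \<in> hom C B' D'\<rbrakk> \<Longrightarrow>
        TensM C (Comp C g1 f1) (Comp C g2 f2) = Comp C (TensM C g1 g2) (TensM C f1 f2)"
    and tens_assoc_obj: "\<lbrakk>A \<in> Obj C; B \<in> Obj C; D \<in> Obj C\<rbrakk> \<Longrightarrow>
        TensO C (TensO C A B) D = TensO C A (TensO C B D)"
    and tens_assoc_arr: "\<lbrakk>f \<in> Arr C; g \<in> Arr C; h \<in> Arr C\<rbrakk> \<Longrightarrow>
        TensM C (TensM C f g) h = TensM C f (TensM C g h)"
    and unit_left_obj: "A \<in> Obj C \<Longrightarrow> TensO C (Unit C) A = A"
    and unit_right_obj: "A \<in> Obj C \<Longrightarrow> TensO C A (Unit C) = A"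
    and unit_left_arr: "f \<in> Arr C \<Longrightarrow> TensM C (Idm C (Unit C)) f = f"
    and unit_right_arr: "f \<in> Arr C \<Longrightarrow> TensM C f (Idm C (Unit C)) = f"
    and swap_hom: "\<lbrakk>A \<in> Obj C; B \<in> Obj C\<rbrakk> \<Longrightarrow> Swap C A B \<in> hom C (TensO C A B) (TensO C B A)"
    and swap_nat: "\<lbrakk>f \<in> hom C A B; g \<in> hom C A' B'\<rbrakk> \<Longrightarrow>
        Comp C (Swap C B B') (TensM C f g) = Comp C (TensM C g f) (Swap C A A')"
    and swap_inv: "\<lbrakk>A \<in> Obj C; B \<in> Obj C\<rbrakk> \<Longrightarrow>
        Comp C (Swap C B A) (Swap C A B) = Idm C (TensO C A B)"
    and swap_hexagon: "\<lbrakk>A \<in> Obj C; B \<in> Obj C; D \<in> Obj C\<rbrakk> \<Longrightarrow>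
        Swap C A (TensO C B D) =
        Comp C (TensM C (Idm C B) (Swap C A D)) (TensM C (Swap C A B) (Idm C D))"
    and copy_hom: "A \<in> Obj C \<Longrightarrow> Copy C A \<in> hom C A (TensO C A A)"
    and del_hom: "A \<in> Obj C \<Longrightarrow> Del C A \<in> hom C A (Unit C)"
    and counit_left: "A \<in> Obj C \<Longrightarrow> Comp C (TensM C (Del C A) (Idm C A)) (Copy C A) = Idm C A"
    and counit_right: "A \<in> Obj C \<Longrightarrow> Comp C (TensM C (Idm C A) (Del C A)) (Copy C A) = Idm C A"
    and coassoc: "A \<in> Obj C \<Longrightarrow>
        Comp C (TensM C (Copy C A) (Idm C A)) (Copy C A) =
        Comp C (TensM C (Idm C A) (Copy C A)) (Copy C A)"
    and cocomm: "A \<in> Obj C \<Longrightarrow> Comp C (Swap C A A) (Copy C A) = Copy C A"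
    and copy_tens: "\<lbrakk>A \<in> Obj C; B \<in> Obj C\<rbrakk> \<Longrightarrow>
        Copy C (TensO C A B) =
        Comp C (TensM C (Idm C A) (TensM C (Swap C A B) (Idm C B))) (TensM C (Copy C A) (Copy C B))"
    and del_tens: "\<lbrakk>A \<in> Obj C; B \<in> Obj C\<rbrakk> \<Longrightarrow>
        Del C (TensO C A B) = TensM C (Del C A) (Del C B)"
    and copy_unit: "Copy C (Unit C) = Idm C (Unit C)"
    and del_unit: "Del C (Unit C) = Idm C (Unit C)"
    and unit_terminal: "f \<in> hom C A (Unit C) \<Longrightarrow> f = Del C A"

definition deterministic :: "('o, 'm, 'x) mcat_scheme \<Rightarrow> 'm \<Rightarrow> bool" where
  "deterministic C f \<longleftrightarrow> f \<in> Arr C \<and>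
     Comp C (Copy C (Cod C f)) f = Comp C (TensM C f f) (Copy C (Dom C f))"

definition positive :: "('o, 'm, 'x) mcat_scheme \<Rightarrow> bool" where
  "positive C \<longleftrightarrow> (\<forall>X Y Z f g. f \<in> hom C X Y \<longrightarrow> g \<in> hom C Y Z \<longrightarrow>
      deterministic C (Comp C g f) \<longrightarrow>
      Comp C (TensM C (Idm C Y) g) (Comp C (Copy C Y) f) =
      Comp C (TensM C f (Comp C g f)) (Copy C X))"

definition dilation :: "('o, 'm, 'x) mcat_scheme \<Rightarrow> 'm \<Rightarrow> 'o \<Rightarrow> 'm \<Rightarrow> bool" where
  "dilation C p E \<pi> \<longleftrightarrow> p \<in> Arr C \<and> E \<in> Obj C \<and>
     \<pi> \<in> hom C (Dom C p) (TensO C (Cod C p) E) \<and>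
     Comp C (TensM C (Idm C (Cod C p)) (Del C E)) \<pi> = p"

definition dil_equal :: "('o, 'm, 'x) mcat_scheme \<Rightarrow> 'm \<Rightarrow> 'o \<Rightarrow> 'o \<Rightarrow> 'm \<Rightarrow> 'm \<Rightarrow> bool" where
  "dil_equal C \<pi> X E f1 f2 \<longleftrightarrow>
     (\<forall>F \<rho>. dilation C \<pi> F \<rho> \<longrightarrow>
        Comp C (TensM C (Idm C X) (TensM C f1 (Idm C F))) \<rho> =
        Comp C (TensM C (Idm C X) (TensM C f2 (Idm C F))) \<rho>)"

definition initial_dilation :: "('o, 'm, 'x) mcat_scheme \<Rightarrow> 'm \<Rightarrow> 'o \<Rightarrow> 'm \<Rightarrow> bool" where
  "initial_dilation C p E \<pi> \<longleftrightarrow> dilation C p E \<pi> \<and>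
     (\<forall>E' \<pi>'. dilation C p E' \<pi>' \<longrightarrow>
        (\<exists>f \<in> hom C E E'. Comp C (TensM C (Idm C (Cod C p)) f) \<pi> = \<pi>') \<and>
        (\<forall>f1 \<in> hom C E E'. \<forall>f2 \<in> hom C E E'.
            Comp C (TensM C (Idm C (Cod C p)) f1) \<pi> = \<pi>' \<longrightarrow>
            Comp C (TensM C (Idm C (Cod C p)) f2) \<pi> = \<pi>' \<longrightarrow>
            dil_equal C \<pi> (Cod C p) E f1 f2))"

definition non_creative :: "('o, 'm, 'x) mcat_scheme \<Rightarrow> 'm \<Rightarrow> bool" where
  "non_creative C p \<longleftrightarrow> p \<in> Arr C \<and>
     (\<forall>E \<pi>. dilation C p E \<pi> \<longrightarrow>
        (\<exists>\<iota>. dilation C (Idm C (Dom C p)) E \<iota> \<and>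
             \<pi> = Comp C (TensM C p (Idm C E)) \<iota>))"

end

theory Submission
  imports Defs
begin

context markov_category
begin

abbreviation cmp (infixr "\<cdot>" 55) where "g \<cdot> f \<equiv> Comp C g f"
abbreviation tns (infixr "\<otimes>" 60) where "f \<otimes> g \<equiv> TensM C f g"

lemma hom_iff: "f \<in> hom C A B \<longleftrightarrow> f \<in> Arr C \<and> Dom C f = A \<and> Cod C f = B"
  by (simp add: hom_def)

lemma obj_simps[simp]:
  "f \<in> Arr C \<Longrightarrow> Dom C f \<in> Obj C"
  "f \<in> Arr C \<Longrightarrow> Cod C f \<in> Obj C"
  "A \<in> Obj C \<Longrightarrow> B \<in> Obj C \<Longrightarrow> TensO C A B \<in> Obj C"
  "Unit C \<in> Obj C"
  using dom_obj cod_obj tens_obj unit_obj by auto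

lemma obj_eqs[simp]:
  "A \<in> Obj C \<Longrightarrow> B \<in> Obj C \<Longrightarrow> D \<in> Obj C \<Longrightarrow> TensO C (TensO C A B) D = TensO C A (TensO C B D)"
  "A \<in> Obj C \<Longrightarrow> TensO C (Unit C) A = A"
  "A \<in> Obj C \<Longrightarrow> TensO C A (Unit C) = A"
  using tens_assoc_obj unit_left_obj unit_right_obj by auto

lemma id_simps[simp]:
  "A \<in> Obj C \<Longrightarrow> Idm C A \<in> Arr C"
  "A \<in> Obj C \<Longrightarrow> Dom C (Idm C A) = A"
  "A \<in> Obj C \<Longrightarrow> Cod C (Idm C A) = A"
  using id_hom by (auto simp: hom_def)

lemma comp_simps[simp]:
  assumes "f \<in> Arr C" "g \<in> Arr C" "Cod C f = Dom C g"
  shows "g \<cdot> f \<in> Arr C" "Dom C (g \<cdot> f) = Dom C f" "Cod C (g \<cdot> f) = Cod C g"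
  using comp_hom[of f "Dom C f" "Cod C f" g "Cod C g"] assms by (auto simp: hom_def)

lemma tens_simps[simp]:
  assumes "f \<in> Arr C" "g \<in> Arr C"
  shows "f \<otimes> g \<in> Arr C" "Dom C (f \<otimes> g) = TensO C (Dom C f) (Dom C g)"
    "Cod C (f \<otimes> g) = TensO C (Cod C f) (Cod C g)"
  using tens_hom[of f "Dom C f" "Cod C f" g "Dom C g" "Cod C g"] assms by (auto simp: hom_def)

lemma copy_simps[simp]:
  "A \<in> Obj C \<Longrightarrow> Copy C A \<in> Arr C"
  "A \<in> Obj C \<Longrightarrow> Dom C (Copy C A) = A"
  "A \<in> Obj C \<Longrightarrow> Cod C (Copy C A) = TensO C A A"
  using copy_hom by (auto simp: hom_def)

lemma del_simps[simp]:
  "A \<in> Obj C \<Longrightarrow> Del C A \<in> Arr C"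
  "A \<in> Obj C \<Longrightarrow> Dom C (Del C A) = A"
  "A \<in> Obj C \<Longrightarrow> Cod C (Del C A) = Unit C"
  using del_hom by (auto simp: hom_def)

lemma swap_simps[simp]:
  "A \<in> Obj C \<Longrightarrow> B \<in> Obj C \<Longrightarrow> Swap C A B \<in> Arr C"
  "A \<in> Obj C \<Longrightarrow> B \<in> Obj C \<Longrightarrow> Dom C (Swap C A B) = TensO C A B"
  "A \<in> Obj C \<Longrightarrow> B \<in> Obj C \<Longrightarrow> Cod C (Swap C A B) = TensO C B A"
  using swap_hom by (auto simp: hom_def)

lemma assoc:
  assumes "f \<in> Arr C" "g \<in> Arr C" "h \<in> Arr C" "Cod C f = Dom C g" "Cod C g = Dom C h"
  shows "(h \<cdot> g) \<cdot> f = h \<cdot> (g \<cdot> f)"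
  using comp_assoc[of f "Dom C f" "Cod C f" g "Cod C g" h "Cod C h"] assms by (auto simp: hom_def)

lemma idl: "f \<in> Arr C \<Longrightarrow> Cod C f = A \<Longrightarrow> Idm C A \<cdot> f = f"
  using id_left by auto
lemma idr: "f \<in> Arr C \<Longrightarrow> Dom C f = A \<Longrightarrow> f \<cdot> Idm C A = f"
  using id_right by auto

lemma interchange:
  assumes "f1 \<in> Arr C" "g1 \<in> Arr C" "f2 \<in> Arr C" "g2 \<in> Arr C"
    "Cod C f1 = Dom C g1" "Cod C f2 = Dom C g2"
  shows "(g1 \<otimes> g2) \<cdot> (f1 \<otimes> f2) = (g1 \<cdot> f1) \<otimes> (g2 \<cdot> f2)"
  using tens_comp[of f1 "Dom C f1" "Cod C f1" g1 "Cod C g1" f2 "Dom C f2" "Cod C f2" g2 "Cod C g2"]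
    assms by (auto simp: hom_def)

lemma tassoc: "f \<in> Arr C \<Longrightarrow> g \<in> Arr C \<Longrightarrow> h \<in> Arr C \<Longrightarrow> (f \<otimes> g) \<otimes> h = f \<otimes> (g \<otimes> h)"
  using tens_assoc_arr by auto

lemma unitl: "f \<in> Arr C \<Longrightarrow> Idm C (Unit C) \<otimes> f = f"
  using unit_left_arr by auto
lemma unitr: "f \<in> Arr C \<Longrightarrow> f \<otimes> Idm C (Unit C) = f"
  using unit_right_arr by auto

lemma del_comp: "f \<in> Arr C \<Longrightarrow> Cod C f = Y \<Longrightarrow> Del C Y \<cdot> f = Del C (Dom C f)"
  by (rule unit_terminal) (auto simp: hom_def)

lemma tid: "A \<in> Obj C \<Longrightarrow> B \<in> Obj C \<Longrightarrow> Idm C A \<otimes> Idm C B = Idm C (TensO C A B)"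
  using tens_id by auto

lemma marg1:
  assumes a: "a \<in> Arr C" and b: "b \<in> Arr C" and "Dom C a = A" "Dom C b = A"
  shows "(Idm C (Cod C a) \<otimes> Del C (Cod C b)) \<cdot> ((a \<otimes> b) \<cdot> Copy C A) = a"
proof -
  have A: "A \<in> Obj C" using assms by auto
  have "(Idm C (Cod C a) \<otimes> Del C (Cod C b)) \<cdot> ((a \<otimes> b) \<cdot> Copy C A)
      = ((Idm C (Cod C a) \<otimes> Del C (Cod C b)) \<cdot> (a \<otimes> b)) \<cdot> Copy C A"
    using assms A by (simp add: assoc)
  also have "(Idm C (Cod C a) \<otimes> Del C (Cod C b)) \<cdot> (a \<otimes> b) = a \<otimes> Del C A"
    using assms by (simp add: interchange idl del_comp)
  also have "a \<otimes> Del C A = (a \<otimes> Idm C (Unit C)) \<cdot> (Idm C A \<otimes> Del C A)"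
    using assms A by (simp add: interchange idl idr)
  also have "... = a \<cdot> (Idm C A \<otimes> Del C A)" using a by (simp add: unitr)
  also have "(a \<cdot> (Idm C A \<otimes> Del C A)) \<cdot> Copy C A = a"
    using assms A by (simp add: assoc counit_right idr)
  finally show ?thesis .
qed

lemma marg2:
  assumes a: "a \<in> Arr C" and b: "b \<in> Arr C" and "Dom C a = A" "Dom C b = A"
  shows "(Del C (Cod C a) \<otimes> Idm C (Cod C b)) \<cdot> ((a \<otimes> b) \<cdot> Copy C A) = b"
proof -
  have A: "A \<in> Obj C" using assms by auto
  have "(Del C (Cod C a) \<otimes> Idm C (Cod C b)) \<cdot> ((a \<otimes> b) \<cdot> Copy C A)
      = ((Del C (Cod C a) \<otimes> Idm C (Cod C b)) \<cdot> (a \<otimes> b)) \<cdot> Copy C A"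
    using assms A by (simp add: assoc)
  also have "(Del C (Cod C a) \<otimes> Idm C (Cod C b)) \<cdot> (a \<otimes> b) = Del C A \<otimes> b"
    using assms by (simp add: interchange idl del_comp)
  also have "Del C A \<otimes> b = (Idm C (Unit C) \<otimes> b) \<cdot> (Del C A \<otimes> Idm C A)"
    using assms A by (simp add: interchange idl idr)
  also have "... = b \<cdot> (Del C A \<otimes> Idm C A)" using b by (simp add: unitl)
  also have "(b \<cdot> (Del C A \<otimes> Idm C A)) \<cdot> Copy C A = b"
    using assms A by (simp add: assoc counit_left idr)
  finally show ?thesis .
qed


lemma init_ex:
  assumes init: "\<forall>X\<in>Obj C. initial_dilation C (Idm C X) X (Copy C X)"
    and X: "X \<in> Obj C" and d: "dilation C (Idm C X) E \<iota>"
  shows "\<exists>h. h \<in> Arr C \<and> Dom C h = X \<and> Cod C h = E \<and> (Idm C X \<otimes> h) \<cdot> Copy C X = \<iota>"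
proof -
  have "initial_dilation C (Idm C X) X (Copy C X)" using init X by auto
  then obtain h where "h \<in> hom C X E" "(Idm C (Cod C (Idm C X)) \<otimes> h) \<cdot> Copy C X = \<iota>"
    using d unfolding initial_dilation_def using X by fastforce
  then show ?thesis using X by (auto simp: hom_def)
qed

lemma nc_det:
  assumes init: "\<forall>X\<in>Obj C. initial_dilation C (Idm C X) X (Copy C X)"
    and nc: "non_creative C p"
  shows "deterministic C p"
proof -
  define A where "A = Dom C p"
  define X where "X = Cod C p"
  have p: "p \<in> Arr C" using nc by (simp add: non_creative_def)
  have A: "A \<in> Obj C" and X: "X \<in> Obj C" using p by (auto simp: A_def X_def)
  define \<pi> where "\<pi> = Copy C X \<cdot> p"
  have dil: "dilation C p X \<pi>"
    unfolding dilation_def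
  proof (intro conjI)
    show "\<pi> \<in> hom C (Dom C p) (TensO C (Cod C p) X)"
      using p X by (simp add: hom_def \<pi>_def X_def)
    have "(Idm C (Cod C p) \<otimes> Del C X) \<cdot> \<pi> = ((Idm C X \<otimes> Del C X) \<cdot> Copy C X) \<cdot> p"
      using p X by (simp add: \<pi>_def X_def assoc)
    also have "... = p" using p X by (simp add: counit_right idl X_def)
    finally show "(Idm C (Cod C p) \<otimes> Del C X) \<cdot> \<pi> = p" .
  qed (use p X in auto)
  then obtain \<iota> where i: "dilation C (Idm C A) X \<iota>" and pi: "\<pi> = (p \<otimes> Idm C X) \<cdot> \<iota>"
    using nc unfolding non_creative_def A_def by blast
  obtain h where h: "h \<in> Arr C" "Dom C h = A" "Cod C h = X" and hi: "(Idm C A \<otimes> h) \<cdot> Copy C A = \<iota>"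
    using init_ex[OF init A i] by blast
  have "\<pi> = (p \<otimes> Idm C X) \<cdot> ((Idm C A \<otimes> h) \<cdot> Copy C A)" using pi hi by simp
  also have "... = ((p \<otimes> Idm C X) \<cdot> (Idm C A \<otimes> h)) \<cdot> Copy C A"
    using p h A X by (simp add: assoc A_def X_def)
  also have "(p \<otimes> Idm C X) \<cdot> (Idm C A \<otimes> h) = p \<otimes> h"
    using p h A X by (simp add: interchange idl idr A_def X_def)
  finally have pi2: "\<pi> = (p \<otimes> h) \<cdot> Copy C A" .
  have "h = (Del C X \<otimes> Idm C X) \<cdot> \<pi>"
    using pi2 marg2[of p h A] p h by (simp add: A_def X_def)
  also have "... = ((Del C X \<otimes> Idm C X) \<cdot> Copy C X) \<cdot> p"
    using p X by (simp add: \<pi>_def X_def assoc)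
  also have "... = p" using p X by (simp add: counit_left idl X_def)
  finally have "h = p" .
  then show ?thesis using pi2 p unfolding deterministic_def \<pi>_def A_def X_def by simp
qed


lemma swapcopy:
  assumes X: "X \<in> Obj C" and E: "E \<in> Obj C"
  shows "(Del C X \<otimes> (Idm C E \<otimes> (Idm C X \<otimes> Del C E))) \<cdot> Copy C (TensO C X E) = Swap C X E"
proof -
  have ie: "Idm C E \<otimes> (Idm C X \<otimes> Del C E) = Idm C (TensO C E X) \<otimes> Del C E"
    using X E by (simp add: tassoc[symmetric] tid)
  have "(Del C X \<otimes> (Idm C E \<otimes> (Idm C X \<otimes> Del C E))) \<cdot> Copy C (TensO C X E)
     = (Del C X \<otimes> (Idm C E \<otimes> (Idm C X \<otimes> Del C E))) \<cdot>
        ((Idm C X \<otimes> (Swap C X E \<otimes> Idm C E)) \<cdot> (Copy C X \<otimes> Copy C E))"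
    using X E by (simp add: copy_tens)
  also have "... = ((Del C X \<otimes> (Idm C E \<otimes> (Idm C X \<otimes> Del C E))) \<cdot>
        (Idm C X \<otimes> (Swap C X E \<otimes> Idm C E))) \<cdot> (Copy C X \<otimes> Copy C E)"
    using X E by (simp add: assoc)
  also note ie
  also have "(Del C X \<otimes> (Idm C (TensO C E X) \<otimes> Del C E)) \<cdot>
        (Idm C X \<otimes> (Swap C X E \<otimes> Idm C E)) = Del C X \<otimes> (Swap C X E \<otimes> Del C E)"
    using X E by (simp add: interchange idl idr)
  also have "Del C X \<otimes> (Swap C X E \<otimes> Del C E) =
       (Idm C (Unit C) \<otimes> (Swap C X E \<otimes> Idm C (Unit C))) \<cdot>
       (Del C X \<otimes> (Idm C (TensO C X E) \<otimes> Del C E))"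
    using X E by (simp add: interchange idl idr)
  also have "Idm C (Unit C) \<otimes> (Swap C X E \<otimes> Idm C (Unit C)) = Swap C X E"
    using X E by (simp add: unitl unitr)
  also have "Del C X \<otimes> (Idm C (TensO C X E) \<otimes> Del C E) =
      (Del C X \<otimes> Idm C X) \<otimes> (Idm C E \<otimes> Del C E)"
    using X E by (simp add: tassoc tid[symmetric])
  also have "(Swap C X E \<cdot> ((Del C X \<otimes> Idm C X) \<otimes> (Idm C E \<otimes> Del C E))) \<cdot>
       (Copy C X \<otimes> Copy C E) =
     Swap C X E \<cdot> (((Del C X \<otimes> Idm C X) \<otimes> (Idm C E \<otimes> Del C E)) \<cdot> (Copy C X \<otimes> Copy C E))"
    using X E by (simp add: assoc)
  also have "((Del C X \<otimes> Idm C X) \<otimes> (Idm C E \<otimes> Del C E)) \<cdot> (Copy C X \<otimes> Copy C E)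
      = Idm C (TensO C X E)"
    using X E by (simp add: interchange counit_left counit_right tid)
  also have "Swap C X E \<cdot> Idm C (TensO C X E) = Swap C X E"
    using X E by (simp add: idr)
  finally have eq: "(Del C X \<otimes> (Idm C (TensO C E X) \<otimes> Del C E)) \<cdot> Copy C (TensO C X E) = Swap C X E" .
  show ?thesis unfolding ie by (rule eq)
qed


lemma indep:
  assumes pos: "positive C" and det: "deterministic C p" and dil: "dilation C p E \<pi>"
  shows "\<pi> = (p \<otimes> ((Del C (Cod C p) \<otimes> Idm C E) \<cdot> \<pi>)) \<cdot> Copy C (Dom C p)"
proof -
  define A where "A = Dom C p"
  define X where "X = Cod C p"
  define \<pi>E where "\<pi>E = (Del C X \<otimes> Idm C E) \<cdot> \<pi>"
  have p: "p \<in> Arr C" using det by (simp add: deterministic_def)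
  have A: "A \<in> Obj C" and X: "X \<in> Obj C" using p by (auto simp: A_def X_def)
  have E: "E \<in> Obj C" and pi: "\<pi> \<in> Arr C" "Dom C \<pi> = A" "Cod C \<pi> = TensO C X E"
    and marg: "(Idm C X \<otimes> Del C E) \<cdot> \<pi> = p"
    using dil by (auto simp: dilation_def hom_def A_def X_def)
  have piE: "\<pi>E \<in> Arr C" "Dom C \<pi>E = A" "Cod C \<pi>E = E"
    using pi X E by (auto simp: \<pi>E_def)
  define g where "g = Idm C X \<otimes> Del C E"
  have g: "g \<in> hom C (TensO C X E) X" using X E by (simp add: g_def hom_def)
  have P: "(Idm C (TensO C X E) \<otimes> g) \<cdot> (Copy C (TensO C X E) \<cdot> \<pi>) = (\<pi> \<otimes> (g \<cdot> \<pi>)) \<cdot> Copy C A"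
    using pos g pi det marg unfolding positive_def g_def
    by (metis (no_types, lifting) hom_iff)
  define k where "k = (Del C X \<otimes> Idm C E) \<otimes> Idm C X"
  have "k \<cdot> ((\<pi> \<otimes> (g \<cdot> \<pi>)) \<cdot> Copy C A) = (k \<cdot> (\<pi> \<otimes> p)) \<cdot> Copy C A"
    using pi X E A marg p by (simp add: assoc k_def g_def X_def A_def[symmetric])
  also have "k \<cdot> (\<pi> \<otimes> p) = \<pi>E \<otimes> p"
    using pi X E p by (simp add: interchange idl \<pi>E_def X_def k_def)
  finally have R: "k \<cdot> ((\<pi> \<otimes> (g \<cdot> \<pi>)) \<cdot> Copy C A) = (\<pi>E \<otimes> p) \<cdot> Copy C A" .
  have "k \<cdot> ((Idm C (TensO C X E) \<otimes> g) \<cdot> (Copy C (TensO C X E) \<cdot> \<pi>))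
      = ((k \<cdot> (Idm C (TensO C X E) \<otimes> g)) \<cdot> Copy C (TensO C X E)) \<cdot> \<pi>"
    using pi X E by (simp add: assoc k_def g_def)
  also have "k \<cdot> (Idm C (TensO C X E) \<otimes> g) =
     (Del C X \<otimes> Idm C E) \<otimes> g"
    using X E by (simp add: interchange idl idr g_def k_def)
  also have "(Del C X \<otimes> Idm C E) \<otimes> g = Del C X \<otimes> (Idm C E \<otimes> (Idm C X \<otimes> Del C E))"
    using X E by (simp add: g_def tassoc)
  also have "(Del C X \<otimes> (Idm C E \<otimes> (Idm C X \<otimes> Del C E))) \<cdot> Copy C (TensO C X E) = Swap C X E"
    using X E by (rule swapcopy)
  finally have L: "k \<cdot> ((Idm C (TensO C X E) \<otimes> g) \<cdot> (Copy C (TensO C X E) \<cdot> \<pi>)) = Swap C X E \<cdot> \<pi>" .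
  have S: "Swap C X E \<cdot> \<pi> = (\<pi>E \<otimes> p) \<cdot> Copy C A" using L R P by simp
  have "\<pi> = (Swap C E X \<cdot> Swap C X E) \<cdot> \<pi>"
    using swap_inv X E pi by (simp add: idl)
  also have "... = Swap C E X \<cdot> ((\<pi>E \<otimes> p) \<cdot> Copy C A)"
    using X E pi by (simp add: assoc S)
  also have "... = (Swap C E X \<cdot> (\<pi>E \<otimes> p)) \<cdot> Copy C A"
    using X E piE p A by (simp add: assoc X_def A_def)
  also have "Swap C E X \<cdot> (\<pi>E \<otimes> p) = (p \<otimes> \<pi>E) \<cdot> Swap C A A"
    using swap_nat[of \<pi>E A E p A X] piE p by (simp add: hom_def A_def X_def)
  also have "((p \<otimes> \<pi>E) \<cdot> Swap C A A) \<cdot> Copy C A = (p \<otimes> \<pi>E) \<cdot> Copy C A"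
    using A piE p by (simp add: assoc cocomm A_def)
  finally show ?thesis by (simp add: \<pi>E_def X_def A_def)
qed

lemma det_nc:
  assumes pos: "positive C" and det: "deterministic C p"
  shows "non_creative C p"
proof -
  have p: "p \<in> Arr C" using det by (simp add: deterministic_def)
  define A where "A = Dom C p"
  define X where "X = Cod C p"
  have A: "A \<in> Obj C" and X: "X \<in> Obj C" using p by (auto simp: A_def X_def)
  show ?thesis unfolding non_creative_def
  proof (intro conjI allI impI p)
    fix E \<pi> assume dil: "dilation C p E \<pi>"
    have E: "E \<in> Obj C" and pi: "\<pi> \<in> Arr C" "Dom C \<pi> = A" "Cod C \<pi> = TensO C X E"
      using dil by (auto simp: dilation_def hom_def A_def X_def)
    define \<pi>E where "\<pi>E = (Del C X \<otimes> Idm C E) \<cdot> \<pi>"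
    have piE: "\<pi>E \<in> Arr C" "Dom C \<pi>E = A" "Cod C \<pi>E = E"
      using pi X E by (auto simp: \<pi>E_def)
    have I: "\<pi> = (p \<otimes> \<pi>E) \<cdot> Copy C A"
      using indep[OF pos det dil] by (simp add: \<pi>E_def X_def A_def)
    define \<iota> where "\<iota> = (Idm C A \<otimes> \<pi>E) \<cdot> Copy C A"
    have "dilation C (Idm C (Dom C p)) E \<iota>"
      unfolding dilation_def
    proof (intro conjI)
      show "\<iota> \<in> hom C (Dom C (Idm C (Dom C p))) (TensO C (Cod C (Idm C (Dom C p))) E)"
        using A piE by (simp add: \<iota>_def hom_def A_def)
      show "(Idm C (Cod C (Idm C (Dom C p))) \<otimes> Del C E) \<cdot> \<iota> = Idm C (Dom C p)"
        using marg1[of "Idm C A" \<pi>E A] A piE by (simp add: \<iota>_def A_def)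
    qed (use A E in \<open>auto simp: A_def\<close>)
    moreover have "\<pi> = (p \<otimes> Idm C E) \<cdot> \<iota>"
    proof -
      have "(p \<otimes> Idm C E) \<cdot> \<iota> = ((p \<otimes> Idm C E) \<cdot> (Idm C A \<otimes> \<pi>E)) \<cdot> Copy C A"
        using A E piE p by (simp add: \<iota>_def assoc A_def)
      also have "(p \<otimes> Idm C E) \<cdot> (Idm C A \<otimes> \<pi>E) = p \<otimes> \<pi>E"
        using A E piE p by (simp add: interchange idl idr A_def)
      finally show ?thesis using I by simp
    qed
    ultimately show "\<exists>\<iota>. dilation C (Idm C (Dom C p)) E \<iota> \<and> \<pi> = (p \<otimes> Idm C E) \<cdot> \<iota>" by blast
  qed
qed


lemma all_pos:
  assumes init: "\<forall>X\<in>Obj C. initial_dilation C (Idm C X) X (Copy C X)"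
    and all: "\<forall>p\<in>Arr C. deterministic C p \<longrightarrow> non_creative C p"
  shows "positive C"
  unfolding positive_def
proof (intro allI impI)
  fix X Y Z f g
  assume fh: "f \<in> hom C X Y" and gh: "g \<in> hom C Y Z" and det: "deterministic C (g \<cdot> f)"
  have f: "f \<in> Arr C" "Dom C f = X" "Cod C f = Y" and g: "g \<in> Arr C" "Dom C g = Y" "Cod C g = Z"
    using fh gh by (auto simp: hom_def)
  have X: "X \<in> Obj C" and Y: "Y \<in> Obj C" and Z: "Z \<in> Obj C" using f g by auto
  define \<pi> where "\<pi> = (g \<otimes> Idm C Y) \<cdot> (Copy C Y \<cdot> f)"
  have pi: "\<pi> \<in> Arr C" "Dom C \<pi> = X" "Cod C \<pi> = TensO C Z Y"
    using f g Y by (auto simp: \<pi>_def)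
  have gf: "g \<cdot> f \<in> Arr C" "Dom C (g \<cdot> f) = X" "Cod C (g \<cdot> f) = Z" using f g by auto
  have m1: "(Idm C Z \<otimes> Del C Y) \<cdot> ((g \<otimes> Idm C Y) \<cdot> Copy C Y) = g"
    using marg1[of g "Idm C Y" Y] g Y by simp
  have m2: "(Del C Z \<otimes> Idm C Y) \<cdot> ((g \<otimes> Idm C Y) \<cdot> Copy C Y) = Idm C Y"
    using marg2[of g "Idm C Y" Y] g Y by simp
  have "dilation C (g \<cdot> f) Y \<pi>"
    unfolding dilation_def
  proof (intro conjI)
    show "\<pi> \<in> hom C (Dom C (g \<cdot> f)) (TensO C (Cod C (g \<cdot> f)) Y)"
      using pi gf by (simp add: hom_def)
    have "(Idm C (Cod C (g \<cdot> f)) \<otimes> Del C Y) \<cdot> \<pi> =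
        ((Idm C Z \<otimes> Del C Y) \<cdot> ((g \<otimes> Idm C Y) \<cdot> Copy C Y)) \<cdot> f"
      using f g X Y Z by (simp add: \<pi>_def assoc)
    then show "(Idm C (Cod C (g \<cdot> f)) \<otimes> Del C Y) \<cdot> \<pi> = g \<cdot> f" using m1 by simp
  qed (use gf Y in auto)
  then obtain \<iota> where i: "dilation C (Idm C X) Y \<iota>" and pii: "\<pi> = ((g \<cdot> f) \<otimes> Idm C Y) \<cdot> \<iota>"
    using all gf det unfolding non_creative_def by metis
  obtain h where h: "h \<in> Arr C" "Dom C h = X" "Cod C h = Y" and hi: "(Idm C X \<otimes> h) \<cdot> Copy C X = \<iota>"
    using init_ex[OF init X i] by blast
  have "\<pi> = ((g \<cdot> f) \<otimes> Idm C Y) \<cdot> ((Idm C X \<otimes> h) \<cdot> Copy C X)" using pii hi by simp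
  also have "... = (((g \<cdot> f) \<otimes> Idm C Y) \<cdot> (Idm C X \<otimes> h)) \<cdot> Copy C X"
    using gf h X Y by (simp add: assoc)
  also have "((g \<cdot> f) \<otimes> Idm C Y) \<cdot> (Idm C X \<otimes> h) = (g \<cdot> f) \<otimes> h"
    using gf h X Y by (simp add: interchange idl idr)
  finally have pi2: "\<pi> = ((g \<cdot> f) \<otimes> h) \<cdot> Copy C X" .
  have "h = (Del C Z \<otimes> Idm C Y) \<cdot> \<pi>"
    using pi2 marg2[of "g \<cdot> f" h X] gf h by simp
  also have "... = ((Del C Z \<otimes> Idm C Y) \<cdot> ((g \<otimes> Idm C Y) \<cdot> Copy C Y)) \<cdot> f"
    using f g X Y Z by (simp add: \<pi>_def assoc)
  also have "... = f" using m2 f by (simp add: idl)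
  finally have hf: "h = f" .
  have "(Idm C Y \<otimes> g) \<cdot> (Copy C Y \<cdot> f) = (Idm C Y \<otimes> g) \<cdot> ((Swap C Y Y \<cdot> Copy C Y) \<cdot> f)"
    using cocomm Y by simp
  also have "... = (((Idm C Y \<otimes> g) \<cdot> Swap C Y Y) \<cdot> Copy C Y) \<cdot> f"
    using f g Y by (simp add: assoc)
  also have "(Idm C Y \<otimes> g) \<cdot> Swap C Y Y = Swap C Z Y \<cdot> (g \<otimes> Idm C Y)"
    using swap_nat[of g Y Z "Idm C Y" Y Y] gh Y by (simp add: hom_def)
  also have "((Swap C Z Y \<cdot> (g \<otimes> Idm C Y)) \<cdot> Copy C Y) \<cdot> f = Swap C Z Y \<cdot> \<pi>"
    using f g Y Z by (simp add: assoc \<pi>_def)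
  also have "... = (Swap C Z Y \<cdot> ((g \<cdot> f) \<otimes> f)) \<cdot> Copy C X"
    using pi2 hf gf f X Y Z by (simp add: assoc)
  also have "Swap C Z Y \<cdot> ((g \<cdot> f) \<otimes> f) = (f \<otimes> (g \<cdot> f)) \<cdot> Swap C X X"
    using swap_nat[of "g \<cdot> f" X Z f X Y] gf f by (simp add: hom_def)
  also have "((f \<otimes> (g \<cdot> f)) \<cdot> Swap C X X) \<cdot> Copy C X = (f \<otimes> (g \<cdot> f)) \<cdot> Copy C X"
    using gf f X by (simp add: assoc cocomm)
  finally show "(Idm C Y \<otimes> g) \<cdot> (Copy C Y \<cdot> f) = (f \<otimes> (g \<cdot> f)) \<cdot> Copy C X" .
qed

end

theorem lemma4p15:
  fixes C :: "('o, 'm, 'x) mcat_scheme"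
  assumes "markov_category C"
    and "\<forall>X \<in> Obj C. initial_dilation C (Idm C X) X (Copy C X)"
  shows "(\<forall>p \<in> Arr C. non_creative C p \<longrightarrow> deterministic C p) \<and>
         ((\<forall>p \<in> Arr C. non_creative C p \<longleftrightarrow> deterministic C p) \<longleftrightarrow> positive C)"
proof -
  interpret markov_category C by (rule assms(1))
  have A: "\<forall>p \<in> Arr C. non_creative C p \<longrightarrow> deterministic C p"
    using nc_det[OF assms(2)] by blast
  show ?thesis
  proof (intro conjI A iffI)
    assume "\<forall>p \<in> Arr C. non_creative C p \<longleftrightarrow> deterministic C p"
    then show "positive C" using all_pos[OF assms(2)] by blast
  next
    assume "positive C"
    then show "\<forall>p \<in> Arr C. non_creative C p \<longleftrightarrow> deterministic C p"
      using A det_nc by blast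
  qed
qed

end
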